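(* Let $A\in \mathrm{GL}(m,\mathbb{Z})$, and suppose that there exist a sequence of integers $r_i\to\infty$ and matrices $B_i\in\mathrm{GL}(m,\mathbb{Z})$ satisfying $B_i^{r_i}=A$. Then there exists a nonzero integer $e$ such that $A^e=\mathrm{Id}$. *)

theory Defs
  imports "HOL-Analysis.Analysis"
begin

primrec mat_pow :: "'a::semiring_1^'n^'n \<Rightarrow> nat \<Rightarrow> 'a^'n^'n" where
  "mat_pow A 0 = mat 1"
| "mat_pow A (Suc k) = A ** mat_pow A k"

text \<open>Integer powers; negative exponents use the (two-sided) matrix inverse,
  meaningful for invertible matrices, i.e. elements of GL.\<close>
definition mat_zpow :: "'a::semiring_1^'n^'n \<Rightarrow> int \<Rightarrow> 'a^'n^'n" where
  "mat_zpow A e = (if 0 \<le> e then mat_pow A (nat e) else mat_pow (matrix_inv A) (nat (- e)))"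

end

theory Submission
  imports Defs Jordan_Normal_Form.Spectral_Radius
begin

hide_const (open) Matrix.mat
no_notation Matrix.vec_index (infixl "$" 100)

lemma cmat_comp: "(mat a :: 'a::zero^'n^'n) $ i $ j = (if i = j then a else 0)"
  by (simp add: Finite_Cartesian_Product.mat_def)

lemma matrix_add_rdistrib': "((A::'a::semiring_1^'n^'m) + B) ** C = A ** C + B ** C"
  unfolding matrix_matrix_mult_def
  by (simp add: Finite_Cartesian_Product.vec_eq_iff distrib_right sum.distrib)

lemma mat_add': "(mat (a + b) :: 'a::semiring_1^'n^'n) = mat a + mat b"
  by (simp add: Finite_Cartesian_Product.vec_eq_iff cmat_comp)

lemma mat_scal': "((mat a :: 'a::semiring_1^'n^'n) ** X) $ i $ j = a * X $ i $ j"
proof -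
  have "((mat a :: 'a^'n^'n) ** X) $ i $ j = (\<Sum>k\<in>UNIV. (if i = k then a else 0) * X $ k $ j)"
    by (simp add: matrix_matrix_mult_def cmat_comp)
  also have "\<dots> = (\<Sum>k\<in>UNIV. if i = k then a * X $ k $ j else 0)"
    by (rule sum.cong) auto
  also have "\<dots> = a * X $ i $ j" by simp
  finally show ?thesis .
qed

lemma mat_scal_r': "(X ** (mat a :: 'a::semiring_1^'n^'n)) $ i $ j = X $ i $ j * a"
proof -
  have "(X ** (mat a :: 'a^'n^'n)) $ i $ j = (\<Sum>k\<in>UNIV. X $ i $ k * (if k = j then a else 0))"
    by (simp add: matrix_matrix_mult_def cmat_comp)
  also have "\<dots> = (\<Sum>k\<in>UNIV. if k = j then X $ i $ k * a else 0)"
    by (rule sum.cong) auto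
  also have "\<dots> = X $ i $ j * a" by simp
  finally show ?thesis .
qed

lemma mat_mult': "(mat a :: 'a::semiring_1^'n^'n) ** mat b = mat (a * b)"
  by (simp add: Finite_Cartesian_Product.vec_eq_iff mat_scal' cmat_comp)

lemma mat_comm': "(mat a :: 'a::comm_semiring_1^'n^'n) ** X = X ** mat a"
  by (simp add: Finite_Cartesian_Product.vec_eq_iff mat_scal' mat_scal_r' mult.commute)

definition peval :: "'a::comm_ring_1 poly \<Rightarrow> 'a^'n^'n \<Rightarrow> 'a^'n^'n" where
  "peval p N = fold_coeffs (\<lambda>a X. mat a + N ** X) p 0"

lemma peval_0[simp]: "peval 0 N = 0" by (simp add: peval_def)

lemma peval_pCons: "peval (pCons a p) N = mat a + N ** peval p N"
proof (cases "p = 0")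
  case True
  then show ?thesis
    by (cases "a = 0") (simp_all add: peval_def fold_coeffs_pCons_coeff_not_0_eq)
next
  case False
  then show ?thesis by (simp add: peval_def fold_coeffs_pCons_not_0_0_eq)
qed

lemma peval_add: "peval (p + q) N = peval p N + peval q N"
proof (induct p q rule: poly_induct2)
  case 0 then show ?case by simp
next
  case (pCons a p b q)
  then show ?case by (simp add: peval_pCons mat_add' matrix_add_ldistrib algebra_simps)
qed

lemma peval_smult: "peval (Polynomial.smult c p) N = mat c ** peval p N"
proof (induct p)
  case 0 then show ?case by simp
next
  case (pCons a p)
  have "peval (Polynomial.smult c (pCons a p)) N = mat (c * a) + N ** (mat c ** peval p N)"
    by (simp add: peval_pCons pCons)
  also have "\<dots> = mat c ** (mat a + N ** peval p N)"
    by (simp add: matrix_add_ldistrib mat_mult' matrix_mul_assoc mat_comm'[of c N])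
  finally show ?case by (simp add: peval_pCons)
qed

lemma peval_mult: "peval (p * q) N = peval p N ** peval q N"
proof (induct p)
  case 0 then show ?case by simp
next
  case (pCons a p)
  have "peval (pCons a p * q) N = mat a ** peval q N + N ** (peval p N ** peval q N)"
    by (simp add: peval_add peval_smult peval_pCons pCons)
  also have "\<dots> = (mat a + N ** peval p N) ** peval q N"
    by (simp add: matrix_add_rdistrib' matrix_mul_assoc)
  finally show ?case by (simp add: peval_pCons)
qed

lemma peval_const: "peval [:c:] N = mat c" by (simp add: peval_pCons)
lemma peval_1: "peval 1 N = mat 1" by (simp add: peval_pCons one_pCons)
lemma peval_X: "peval [:0,1:] N = N" by (simp add: peval_pCons)

lemma peval_power: "peval (p ^ k) N = mat_pow (peval p N) k"
  by (induct k) (simp_all add: peval_1 peval_mult)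

lemma peval_diff: "peval (p - q) N = peval p N - peval q N"
  using peval_add[of "p - q" q N] by (simp add: algebra_simps)

lemma binom_aux1: "\<exists>h. (1 + x)^n - 1 = x * (of_nat n + x * (h::'r::comm_ring_1))"
proof (induct n)
  case 0 then show ?case by (intro exI[of _ 0]) simp
next
  case (Suc n)
  then obtain h where h: "(1 + x)^n - 1 = x * (of_nat n + x * h)" by blast
  have "(1 + x)^Suc n - 1 = (1 + x) * ((1 + x)^n - 1) + x" by (simp add: algebra_simps)
  also have "\<dots> = x * (of_nat (Suc n) + x * (h + of_nat n + x * h))" unfolding h by (simp add: algebra_simps)
  finally show ?case by blast
qed

lemma binom_aux2: "\<exists>q. (a + x * (h::'r::comm_ring_1))^s = a^s + x * q"
proof (induct s)
  case 0 then show ?case by (intro exI[of _ 0]) simp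
next
  case (Suc s)
  then obtain q where q: "(a + x * h)^s = a^s + x * q" by blast
  have "(a + x * h)^Suc s = (a + x * h) * (a^s + x * q)" by (simp only: power_Suc q)
  also have "\<dots> = a^Suc s + x * (a^s * h + q * a + x * q * h)" by (simp add: algebra_simps)
  finally show ?case by blast
qed

lemma const_poly_pow': "[:c:]^k = [:(c::'a::comm_semiring_1)^k:]"
  by (induct k) (simp_all add: one_pCons mult.commute)

lemma mat_pow_Suc': "mat_pow A (Suc k) = mat_pow A k ** A"
  by (induct k) (simp_all add: matrix_mul_assoc)

lemma mat_pow_add': "mat_pow A (a + b) = mat_pow A a ** mat_pow A b"
  by (induct a) (simp_all add: matrix_mul_assoc)

lemma mat_pow_mult': "mat_pow (mat_pow A a) b = mat_pow A (a * b)"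
  by (induct b) (simp_all add: mat_pow_add' algebra_simps)

lemma MN_core:
  fixes N :: "'a::comm_ring_1^'n^'n"
  assumes N: "mat_pow N (Suc s) = 0"
  shows "mat_pow (mat_pow (mat 1 + N) n - mat 1) s = mat (of_nat n ^ s) ** mat_pow N s"
    and "mat_pow (mat_pow (mat 1 + N) n - mat 1) (Suc s) = 0"
proof -
  let ?X = "[:0,1:] :: 'a poly"
  obtain h where h: "(1 + ?X)^n - 1 = ?X * (of_nat n + ?X * h)" using binom_aux1 by blast
  obtain q where q: "(of_nat n + ?X * h)^s = of_nat n ^ s + ?X * q" using binom_aux2 by blast
  have M: "mat_pow (mat 1 + N) n - mat 1 = peval ((1 + ?X)^n - 1) N"
    by (simp add: peval_diff peval_power peval_add peval_1 peval_X)
  have "((1 + ?X)^n - 1)^s = [:of_nat n ^ s:] * ?X^s + ?X^(Suc s) * q"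
    unfolding h power_mult_distrib q by (simp add: algebra_simps of_nat_poly const_poly_pow')
  then have "mat_pow (mat_pow (mat 1 + N) n - mat 1) s = peval ([:of_nat n ^ s:] * ?X^s) N + peval (?X^(Suc s) * q) N"
    unfolding M peval_power[symmetric] by (simp only: peval_add)
  also have "\<dots> = mat (of_nat n ^ s) ** mat_pow N s + mat_pow N (Suc s) ** peval q N"
    by (simp only: peval_mult peval_const peval_power peval_X)
  finally show "mat_pow (mat_pow (mat 1 + N) n - mat 1) s = mat (of_nat n ^ s) ** mat_pow N s"
    using N by simp
  have "((1 + ?X)^n - 1)^Suc s = ?X^(Suc s) * (of_nat n + ?X * h)^Suc s"
    unfolding h power_mult_distrib by simp
  then have "mat_pow (mat_pow (mat 1 + N) n - mat 1) (Suc s) = mat_pow N (Suc s) ** peval ((of_nat n + ?X * h)^Suc s) N"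
    unfolding M peval_power[symmetric] by (simp only: peval_mult peval_power peval_X)
  then show "mat_pow (mat_pow (mat 1 + N) n - mat 1) (Suc s) = 0" using N by simp
qed



definition enum_idx :: "nat \<Rightarrow> 'n::finite" where
  "enum_idx = (SOME h. bij_betw h {0..<CARD('n)} (UNIV::'n set))"

lemma bij_enum_idx: "bij_betw (enum_idx :: nat \<Rightarrow> 'n::finite) {0..<CARD('n)} UNIV"
proof -
  have "\<exists>h. bij_betw h {0..<CARD('n)} (UNIV::'n set)"
    using ex_bij_betw_nat_finite[of "UNIV::'n set"] by simp
  then show ?thesis unfolding enum_idx_def by (rule someI_ex)
qed

lemma enum_idx_surj: "\<exists>i < CARD('n). (enum_idx i :: 'n::finite) = x"
proof -
  have "x \<in> (enum_idx :: nat \<Rightarrow> 'n) ` {0..<CARD('n)}"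
    using bij_enum_idx[where 'n='n] unfolding bij_betw_def by simp
  then show ?thesis by auto
qed

definition to_jnf :: "'a^'n^'n \<Rightarrow> 'a mat" where
  "to_jnf X = Matrix.mat CARD('n) CARD('n) (\<lambda>(i,j). X $ enum_idx i $ enum_idx j)"

lemma to_jnf_carrier[simp]: "to_jnf (X :: 'a^'n^'n) \<in> carrier_mat CARD('n) CARD('n)"
  by (simp add: to_jnf_def)

lemma to_jnf_dim[simp]: "dim_row (to_jnf (X :: 'a^'n^'n)) = CARD('n)" "dim_col (to_jnf (X :: 'a^'n^'n)) = CARD('n)"
  by (simp_all add: to_jnf_def)

lemma to_jnf_index: "i < CARD('n) \<Longrightarrow> j < CARD('n) \<Longrightarrow> to_jnf (X :: 'a^'n^'n) $$ (i,j) = X $ enum_idx i $ enum_idx j"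
  by (simp add: to_jnf_def)

lemma to_jnf_mult: "to_jnf ((X :: 'a::semiring_1^'n^'n) ** Y) = to_jnf X * to_jnf Y"
proof (rule eq_matI)
  fix i j assume ij: "i < dim_row (to_jnf X * to_jnf Y)" "j < dim_col (to_jnf X * to_jnf Y)"
  then have i: "i < CARD('n)" and j: "j < CARD('n)" by (simp_all add: to_jnf_def)
  have "(to_jnf X * to_jnf Y) $$ (i,j) = (\<Sum>l\<in>{0..<CARD('n)}. X $ enum_idx i $ enum_idx l * Y $ enum_idx l $ enum_idx j)"
    using i j by (simp add: index_mult_mat scalar_prod_def to_jnf_def)
  also have "\<dots> = (\<Sum>k\<in>UNIV. X $ enum_idx i $ k * Y $ k $ enum_idx j)"
    by (rule sum.reindex_bij_betw[OF bij_enum_idx])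
  also have "\<dots> = to_jnf (X ** Y) $$ (i,j)"
    using i j by (simp add: to_jnf_def matrix_matrix_mult_def)
  finally show "to_jnf (X ** Y) $$ (i,j) = (to_jnf X * to_jnf Y) $$ (i,j)" by simp
qed (simp_all add: to_jnf_def)

lemma to_jnf_one: "to_jnf (mat 1 :: 'a::semiring_1^'n^'n) = 1\<^sub>m CARD('n)"
proof (rule eq_matI)
  fix i j assume "i < dim_row (1\<^sub>m CARD('n) :: 'a mat)" "j < dim_col (1\<^sub>m CARD('n) :: 'a mat)"
  then have i: "i < CARD('n)" and j: "j < CARD('n)" by simp_all
  have "(enum_idx i :: 'n) = enum_idx j \<longleftrightarrow> i = j"
    using bij_enum_idx[where 'n='n] i j unfolding bij_betw_def inj_on_def by auto
  then show "to_jnf (mat 1 :: 'a^'n^'n) $$ (i,j) = 1\<^sub>m CARD('n) $$ (i,j)"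
    using i j by (simp add: to_jnf_index cmat_comp)
qed (simp_all add: to_jnf_def)

lemma to_jnf_minus: "to_jnf ((X :: 'a::ab_group_add^'n^'n) - Y) = to_jnf X - to_jnf Y"
  by (rule eq_matI) (simp_all add: to_jnf_def)

lemma to_jnf_zero: "to_jnf (0 :: 'a::zero^'n^'n) = 0\<^sub>m CARD('n) CARD('n)"
  by (rule eq_matI) (simp_all add: to_jnf_def)

lemma to_jnf_inj: assumes "to_jnf (X :: 'a^'n^'n) = to_jnf Y" shows "X = Y"
proof -
  have "X $ a $ b = Y $ a $ b" for a b
  proof -
    obtain i where i: "i < CARD('n)" "enum_idx i = a" using enum_idx_surj by blast
    obtain j where j: "j < CARD('n)" "enum_idx j = b" using enum_idx_surj by blast
    have "to_jnf X $$ (i,j) = to_jnf Y $$ (i,j)" using assms by simp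
    then show ?thesis using i j by (simp add: to_jnf_index)
  qed
  then show ?thesis by (simp add: Finite_Cartesian_Product.vec_eq_iff)
qed

lemma to_jnf_pow: "to_jnf (mat_pow (X :: 'a::semiring_1^'n^'n) k) = to_jnf X ^\<^sub>m k"
  by (induct k) (simp_all add: mat_pow_Suc' to_jnf_mult to_jnf_one del: mat_pow.simps(2))



definition utk :: "nat \<Rightarrow> nat \<Rightarrow> 'a::zero mat \<Rightarrow> bool" where
  "utk d k X \<longleftrightarrow> (\<forall>i<d. \<forall>j<d. j < i + k \<longrightarrow> X $$ (i,j) = 0)"

lemma mult_entry: assumes "X \<in> carrier_mat d d" "Y \<in> carrier_mat d d" "i < d" "j < d"
  shows "(X * Y) $$ (i,j) = (\<Sum>l\<in>{0..<d}. X $$ (i,l) * Y $$ (l,j))"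
  using assms by (simp add: scalar_prod_def)

lemma utk_mult: assumes X: "X \<in> carrier_mat d d" and Y: "Y \<in> carrier_mat d d"
  and a: "utk d a X" and b: "utk d b (Y :: 'a::semiring_0 mat)"
  shows "utk d (a + b) (X * Y)"
  unfolding utk_def
proof (intro allI impI)
  fix i j assume ij: "i < d" "j < d" "j < i + (a + b)"
  have "(X * Y) $$ (i,j) = (\<Sum>l\<in>{0..<d}. X $$ (i,l) * Y $$ (l,j))" by (rule mult_entry[OF X Y ij(1,2)])
  also have "\<dots> = 0"
  proof (rule sum.neutral, intro ballI)
    fix l assume l: "l \<in> {0..<d}"
    show "X $$ (i,l) * Y $$ (l,j) = 0"
    proof (cases "l < i + a")
      case True then show ?thesis using a ij l unfolding utk_def by auto
    next
      case False then have "j < l + b" using ij by auto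
      then show ?thesis using b ij l unfolding utk_def by auto
    qed
  qed
  finally show "(X * Y) $$ (i,j) = 0" .
qed

lemma utk_diag: assumes X: "X \<in> carrier_mat d d" and Y: "Y \<in> carrier_mat d d"
  and a: "utk d 0 X" and b: "utk d 0 (Y :: 'a::semiring_0 mat)" and i: "i < d"
  shows "(X * Y) $$ (i,i) = X $$ (i,i) * Y $$ (i,i)"
proof -
  have "(X * Y) $$ (i,i) = (\<Sum>l\<in>{0..<d}. X $$ (i,l) * Y $$ (l,i))" by (rule mult_entry[OF X Y i i])
  also have "\<dots> = (\<Sum>l\<in>{0..<d}. if l = i then X $$ (i,i) * Y $$ (i,i) else 0)"
  proof (rule sum.cong[OF refl])
    fix l assume l: "l \<in> {0..<d}"
    show "X $$ (i,l) * Y $$ (l,i) = (if l = i then X $$ (i,i) * Y $$ (i,i) else 0)"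
    proof (cases "l < i")
      case True then show ?thesis using a i l unfolding utk_def by auto
    next
      case False
      then show ?thesis using b i l unfolding utk_def by auto
    qed
  qed
  also have "\<dots> = X $$ (i,i) * Y $$ (i,i)" using i by simp
  finally show ?thesis .
qed

lemma utk_one: "utk d 0 (1\<^sub>m d)" unfolding utk_def by auto

lemma utk_pow: assumes T: "T \<in> carrier_mat d d" and u: "utk d 0 (T :: 'a::comm_semiring_1 mat)"
  shows "utk d 0 (T ^\<^sub>m k) \<and> (\<forall>i<d. (T ^\<^sub>m k) $$ (i,i) = T $$ (i,i) ^ k)"
proof (induct k)
  case 0 then show ?case using T by (simp add: utk_one)
next
  case (Suc k)
  have Tk: "T ^\<^sub>m k \<in> carrier_mat d d" using T by simp
  from utk_mult[OF Tk T _ u] Suc have "utk d 0 (T ^\<^sub>m Suc k)" by simp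
  moreover have "\<forall>i<d. (T ^\<^sub>m Suc k) $$ (i,i) = T $$ (i,i) ^ Suc k"
    using utk_diag[OF Tk T _ u] Suc by (simp add: mult.commute)
  ultimately show ?case by blast
qed

lemma utk_pow1: assumes S: "S \<in> carrier_mat d d" and u: "utk d 1 (S :: 'a::semiring_1 mat)"
  shows "utk d k (S ^\<^sub>m k)"
proof (induct k)
  case 0 then show ?case using S by (simp add: utk_one)
next
  case (Suc k)
  have Sk: "S ^\<^sub>m k \<in> carrier_mat d d" using S by simp
  from utk_mult[OF Sk S Suc u] show ?case by simp
qed

lemma utk_full: assumes "X \<in> carrier_mat d d" "utk d d X" shows "X = 0\<^sub>m d d"
  using assms by (intro eq_matI) (auto simp: utk_def)

lemma nilp_triangular:
  assumes T: "T \<in> carrier_mat d d" and ut: "upper_triangular (T :: 'a::comm_ring_1 mat)"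
    and diag: "\<And>i. i < d \<Longrightarrow> T $$ (i,i) ^ L = 1"
  shows "(T ^\<^sub>m L - 1\<^sub>m d) ^\<^sub>m d = 0\<^sub>m d d"
proof -
  have u0: "utk d 0 T" using ut T unfolding upper_triangular_def utk_def by auto
  from utk_pow[OF T u0, of L] have uL: "utk d 0 (T ^\<^sub>m L)" and dL: "\<forall>i<d. (T ^\<^sub>m L) $$ (i,i) = 1"
    using diag by auto
  have TL: "T ^\<^sub>m L \<in> carrier_mat d d" using T by simp
  let ?S = "T ^\<^sub>m L - 1\<^sub>m d"
  have S: "?S \<in> carrier_mat d d" by (intro carrier_matI) simp_all
  have "utk d 1 ?S" unfolding utk_def
  proof (intro allI impI)
    fix i j assume ij: "i < d" "j < d" "j < i + 1"
    show "?S $$ (i,j) = 0"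
    proof (cases "j = i")
      case True then show ?thesis using dL ij TL by simp
    next
      case False then have "j < i" using ij by simp
      then show ?thesis using uL ij TL unfolding utk_def by simp
    qed
  qed
  from utk_full[OF _ utk_pow1[OF S this]] S show ?thesis by simp
qed

lemma similar_pow_minus_one:
  assumes sim: "similar_mat_wit B T P Q" and B: "(B :: 'a::comm_ring_1 mat) \<in> carrier_mat d d"
  shows "(B ^\<^sub>m L - 1\<^sub>m d) ^\<^sub>m k = P * ((T ^\<^sub>m L - 1\<^sub>m d) ^\<^sub>m k) * Q"
proof -
  from sim B have T: "T \<in> carrier_mat d d" and P: "P \<in> carrier_mat d d" and Q: "Q \<in> carrier_mat d d"
    and PQ: "P * Q = 1\<^sub>m d" and QP: "Q * P = 1\<^sub>m d" and eq: "B = P * T * Q"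
    unfolding similar_mat_wit_def Let_def by auto
  have BL: "B ^\<^sub>m L = P * (T ^\<^sub>m L) * Q" using similar_mat_wit_pow_id[OF sim] .
  have TL: "T ^\<^sub>m L \<in> carrier_mat d d" using T by simp
  have "B ^\<^sub>m L - 1\<^sub>m d = P * (T ^\<^sub>m L - 1\<^sub>m d) * Q"
  proof -
    have "P * (T ^\<^sub>m L - 1\<^sub>m d) = P * T ^\<^sub>m L - P * 1\<^sub>m d"
      by (rule mult_minus_distrib_mat[OF P TL]) simp
    then have "P * (T ^\<^sub>m L - 1\<^sub>m d) * Q = (P * T ^\<^sub>m L - P * 1\<^sub>m d) * Q" by simp
    also have "\<dots> = P * T ^\<^sub>m L * Q - P * 1\<^sub>m d * Q"
      using P TL Q by (intro minus_mult_distrib_mat) auto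
    also have "\<dots> = B ^\<^sub>m L - 1\<^sub>m d" using BL P PQ by simp
    finally show ?thesis by simp
  qed
  then have "similar_mat_wit (B ^\<^sub>m L - 1\<^sub>m d) (T ^\<^sub>m L - 1\<^sub>m d) P Q"
    unfolding similar_mat_wit_def Let_def using P Q PQ QP TL B by auto
  from similar_mat_wit_pow_id[OF this] show ?thesis .
qed



lemma coeff_linear_prod_bound:
  fixes as :: "complex list"
  assumes "\<forall>a\<in>set as. cmod a \<le> R" "0 \<le> R"
  shows "cmod (coeff (\<Prod>a\<leftarrow>as. [:-a,1:]) k) \<le> (1 + R) ^ length as"
  using assms(1)
proof (induct as arbitrary: k)
  case Nil then show ?case by (cases k) simp_all
next
  case (Cons a as)
  let ?p = "\<Prod>a\<leftarrow>as. [:-a,1:]"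
  have IH: "\<And>k. cmod (coeff ?p k) \<le> (1 + R) ^ length as" using Cons by auto
  have aR: "cmod a \<le> R" using Cons by auto
  have eq: "(\<Prod>a\<leftarrow>a # as. [:-a,1:]) = Polynomial.smult (-a) ?p + pCons 0 ?p"
    by (simp add: mult_pCons_left)
  have c: "coeff (\<Prod>a\<leftarrow>a # as. [:-a,1:]) k = - a * coeff ?p k + (case k of 0 \<Rightarrow> 0 | Suc j \<Rightarrow> coeff ?p j)"
    unfolding eq by (cases k) simp_all
  have b2: "cmod (case k of 0 \<Rightarrow> 0 | Suc j \<Rightarrow> coeff ?p j) \<le> (1 + R) ^ length as"
  proof -
    have nn: "0 \<le> (1 + R) ^ length as" using assms(2) by simp
    show ?thesis using IH nn by (cases k) simp_all
  qed
  have "cmod (- a * coeff ?p k) \<le> R * (1 + R) ^ length as"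
    unfolding norm_mult norm_minus_cancel using aR IH assms(2) by (intro mult_mono) auto
  then have "cmod (coeff (\<Prod>a\<leftarrow>a # as. [:-a,1:]) k) \<le> R * (1 + R) ^ length as + (1 + R) ^ length as"
    unfolding c using b2 norm_triangle_ineq[of "- a * coeff ?p k" "(case k of 0 \<Rightarrow> 0 | Suc j \<Rightarrow> coeff ?p j)"] by linarith
  then show ?case by (simp add: algebra_simps)
qed

lemma root_unity_aux:
  fixes z :: complex
  assumes "z \<noteq> 0" "z ^ a = z ^ b" "a < b" shows "\<exists>k>0. z ^ k = 1"
proof -
  have "z ^ b = z ^ a * z ^ (b - a)" using assms(3) by (simp add: power_add[symmetric])
  then have "z ^ (b - a) = 1" using assms by simp
  then show ?thesis using assms(3) by (intro exI[of _ "b - a"]) simp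
qed

lemma mat_hom_minus_one: "(X :: int mat) \<in> carrier_mat d d \<Longrightarrow>
  (of_int_hom.mat_hom (X - 1\<^sub>m d) :: complex mat) = of_int_hom.mat_hom X - 1\<^sub>m d"
  by (rule eq_matI) auto

lemma mat_hom_zero: "(of_int_hom.mat_hom (0\<^sub>m d d :: int mat) :: complex mat) = 0\<^sub>m d d"
  by (rule eq_matI) auto

lemma spectral_main:
  fixes Ai :: "int mat" and Bi :: "nat \<Rightarrow> int mat" and n :: "nat \<Rightarrow> nat" and I :: "nat set"
  assumes A: "Ai \<in> carrier_mat d d" and B: "\<And>i. Bi i \<in> carrier_mat d d"
    and A0: "\<not> eigenvalue (of_int_hom.mat_hom Ai :: complex mat) 0"
    and pw: "\<And>i. i \<in> I \<Longrightarrow> Bi i ^\<^sub>m n i = Ai" and n1: "\<And>i. i \<in> I \<Longrightarrow> n i \<ge> 1"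
    and inf: "infinite (n ` I)"
  shows "\<exists>L>0. \<exists>J\<subseteq>I. infinite (n ` J) \<and> (\<forall>i\<in>J. (Bi i ^\<^sub>m L - 1\<^sub>m d) ^\<^sub>m d = 0\<^sub>m d d)"
proof -
  define Ac where "Ac = (of_int_hom.mat_hom Ai :: complex mat)"
  define Bc where "Bc i = (of_int_hom.mat_hom (Bi i) :: complex mat)" for i
  have Ac: "Ac \<in> carrier_mat d d" using A by (simp add: Ac_def)
  have Bc: "Bc i \<in> carrier_mat d d" for i using B by (simp add: Bc_def)
  have powc: "Bc i ^\<^sub>m n i = Ac" if "i \<in> I" for i
  proof -
    have "of_int_hom.mat_hom (Bi i ^\<^sub>m n i) = (of_int_hom.mat_hom (Bi i) :: complex mat) ^\<^sub>m n i"
      by (rule of_int_hom.mat_hom_pow[OF B])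
    then show ?thesis unfolding Bc_def Ac_def pw[OF that] by simp
  qed
  define Lam where "Lam = {x. poly (char_poly Ac) x = 0}"
  have finL: "finite Lam" using card_finite_spectrum(1)[OF Ac] spectrum_root_char_poly[OF Ac]
    by (simp add: Lam_def)
  have notin0: "0 \<notin> Lam" using A0 eigenvalue_root_char_poly[OF Ac] by (simp add: Lam_def Ac_def)
  have root_pow: "\<mu> ^ n i \<in> Lam" if i: "i \<in> I" and r: "poly (char_poly (Bc i)) \<mu> = 0" for i \<mu>
  proof -
    have "eigenvalue (Bc i) \<mu>" using r eigenvalue_root_char_poly[OF Bc] by simp
    then obtain v where ev: "eigenvector (Bc i) v \<mu>" unfolding eigenvalue_def by blast
    have p: "Bc i ^\<^sub>m n i *\<^sub>v v = \<mu> ^ n i \<cdot>\<^sub>v v" by (rule eigenvector_pow[OF Bc ev])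
    have "eigenvector Ac v (\<mu> ^ n i)"
      using ev p powc[OF i] Ac Bc[of i] unfolding eigenvector_def by auto
    then have "eigenvalue Ac (\<mu> ^ n i)" unfolding eigenvalue_def by blast
    then show ?thesis using eigenvalue_root_char_poly[OF Ac] by (simp add: Lam_def)
  qed
  define R where "R = 1 + (\<Sum>x\<in>Lam. cmod x)"
  have R1: "R \<ge> 1" unfolding R_def by (simp add: sum_nonneg)
  have LR: "cmod x \<le> R" if "x \<in> Lam" for x
  proof -
    have "cmod x \<le> (\<Sum>x\<in>Lam. cmod x)" using finL that by (intro member_le_sum) auto
    then show ?thesis unfolding R_def by simp
  qed
  have root_bound: "cmod \<mu> \<le> R" if i: "i \<in> I" and r: "poly (char_poly (Bc i)) \<mu> = 0" for i \<mu>
  proof (rule ccontr)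
    assume "\<not> cmod \<mu> \<le> R"
    then have gt: "cmod \<mu> > R" by simp
    have "cmod \<mu> \<le> cmod \<mu> ^ n i" using gt R1 n1[OF i] by (intro self_le_power) auto
    also have "\<dots> = cmod (\<mu> ^ n i)" by (simp add: norm_power)
    also have "\<dots> \<le> R" using LR root_pow[OF i r] by blast
    finally show False using gt by simp
  qed
  define cpi where "cpi i = char_poly (Bi i)" for i
  have cpc: "char_poly (Bc i) = map_poly of_int (cpi i)" for i
    unfolding Bc_def cpi_def by (rule of_int_hom.char_poly_hom[OF B])
  define C where "C = \<lceil>(1 + R) ^ d\<rceil>"
  have coeff_bound: "\<bar>coeff (cpi i) k\<bar> \<le> C" if i: "i \<in> I" for i k
  proof -
    obtain as where as: "char_poly (Bc i) = (\<Prod>a\<leftarrow>as. [:- a, 1:])" and len: "length as = d"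
      using char_poly_factorized[OF Bc] by blast
    have "\<forall>a\<in>set as. cmod a \<le> R"
      using root_bound[OF i] linear_poly_root[of _ as] as by auto
    from coeff_linear_prod_bound[OF this, of k] R1
    have "cmod (coeff (char_poly (Bc i)) k) \<le> (1 + R) ^ d" using as len by simp
    then have "real_of_int \<bar>coeff (cpi i) k\<bar> \<le> (1 + R) ^ d"
      unfolding cpc by (simp add: coeff_map_poly)
    then have "real_of_int \<bar>coeff (cpi i) k\<bar> \<le> real_of_int C"
      using le_of_int_ceiling[of "(1 + R) ^ d"] unfolding C_def by linarith
    then show ?thesis by (simp only: of_int_le_iff)
  qed
  have deg: "degree (cpi i) = d" for i using degree_monic_char_poly[OF B] by (simp add: cpi_def)
  define P where "P = {p::int poly. degree p \<le> d \<and> (\<forall>k. \<bar>coeff p k\<bar> \<le> C)}"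
  have finP: "finite P"
  proof -
    have "P \<subseteq> Poly ` {xs. set xs \<subseteq> {-C..C} \<and> length xs \<le> Suc d}"
    proof
      fix p assume p: "p \<in> P"
      have "set (coeffs p) \<subseteq> {-C..C}"
      proof
        fix c assume "c \<in> set (coeffs p)"
        then have "c \<in> range (coeff p)" unfolding coeffs_def by (cases "p = 0") auto
        then obtain k where ck: "c = coeff p k" by blast
        then have h: "\<bar>c\<bar> \<le> C" using p unfolding P_def by simp
        show "c \<in> {-C..C}" using abs_le_D1[OF h] abs_le_D2[OF h] by simp
      qed
      moreover have "length (coeffs p) \<le> Suc d" using p unfolding P_def coeffs_def by auto
      ultimately show "p \<in> Poly ` {xs. set xs \<subseteq> {-C..C} \<and> length xs \<le> Suc d}"
        by (intro image_eqI[of _ _ "coeffs p"]) (simp_all add: Poly_coeffs)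
    qed
    moreover have "finite (Poly ` {xs. set xs \<subseteq> {-C..C} \<and> length xs \<le> Suc d})"
      by (intro finite_imageI finite_lists_length_le) simp
    ultimately show ?thesis by (rule finite_subset)
  qed
  have cpiP: "cpi i \<in> P" if "i \<in> I" for i using coeff_bound[OF that] deg[of i] by (simp add: P_def)
  have eqU: "n ` I = (\<Union>p\<in>P. n ` {i\<in>I. cpi i = p})" using cpiP by blast
  have "\<exists>chi\<in>P. infinite (n ` {i\<in>I. cpi i = chi})"
  proof (rule ccontr)
    assume "\<not> (\<exists>chi\<in>P. infinite (n ` {i\<in>I. cpi i = chi}))"
    then have "\<forall>p\<in>P. finite (n ` {i\<in>I. cpi i = p})" by blast
    then have "finite (\<Union>p\<in>P. n ` {i\<in>I. cpi i = p})" using finP by (intro finite_UN_I) auto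
    then show False using inf eqU by simp
  qed
  then obtain chi where chiP: "chi \<in> P" and infJ: "infinite (n ` {i\<in>I. cpi i = chi})"
    by blast
  define J where "J = {i\<in>I. cpi i = chi}"
  have JI: "J \<subseteq> I" by (auto simp: J_def)
  have infJ': "infinite (n ` J)" using infJ by (simp add: J_def)
  have "J \<noteq> {}"
  proof
    assume "J = {}"
    then have "n ` J = {}" by simp
    then show False using infJ' by simp
  qed
  then obtain i0 where i0: "i0 \<in> J" by blast
  define Z where "Z = {z::complex. poly (map_poly of_int chi) z = 0}"
  have chi0: "chi = cpi i0" using i0 by (simp add: J_def)
  have finZ: "finite Z"
    using card_finite_spectrum(1)[OF Bc[of i0]] spectrum_root_char_poly[OF Bc[of i0]]
    by (simp add: Z_def chi0 cpc)
  have Zroot: "poly (char_poly (Bc i)) z = 0" if "i \<in> J" "z \<in> Z" for i z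
    using that by (simp add: Z_def cpc J_def)
  have unity: "\<exists>k>0. z ^ k = 1" if z: "z \<in> Z" for z
  proof -
    have sub: "(\<lambda>k. z ^ k) ` (n ` J) \<subseteq> Lam"
    proof
      fix w assume "w \<in> (\<lambda>k. z ^ k) ` (n ` J)"
      then obtain i where i: "i \<in> J" and w: "w = z ^ n i" by blast
      have "i \<in> I" using i JI by blast
      from root_pow[OF this Zroot[OF i z]] show "w \<in> Lam" unfolding w .
    qed
    have "\<not> inj_on (\<lambda>k. z ^ k) (n ` J)"
    proof
      assume "inj_on (\<lambda>k. z ^ k) (n ` J)"
      then have "finite (n ` J)" using finite_subset[OF sub finL] finite_imageD by blast
      then show False using infJ' by simp
    qed
    then obtain a b where ab: "a \<in> n ` J" "b \<in> n ` J" "a \<noteq> b" "z ^ a = z ^ b"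
      unfolding inj_on_def by blast
    have z0: "z \<noteq> 0"
    proof
      assume "z = 0"
      obtain i where i: "i \<in> J" "a = n i" using ab by blast
      have "z ^ a \<in> Lam" using sub ab by blast
      moreover have "z ^ a = 0" using \<open>z = 0\<close> n1[of i] i JI by (auto simp: power_0_left)
      ultimately show False using notin0 by simp
    qed
    show ?thesis
    proof (cases "a < b")
      case True then show ?thesis using root_unity_aux[OF z0 ab(4)] by blast
    next
      case False then have "b < a" using ab by simp
      then show ?thesis using root_unity_aux[OF z0 ab(4)[symmetric]] by blast
    qed
  qed
  define kz where "kz z = (SOME k. k > 0 \<and> z ^ k = (1::complex))" for z
  have kz: "kz z > 0 \<and> z ^ kz z = 1" if "z \<in> Z" for z
    unfolding kz_def using unity[OF that] by (rule someI_ex)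
  define L where "L = (\<Prod>z\<in>Z. kz z)"
  have L0: "L > 0" unfolding L_def using kz by (simp add: prod_pos)
  have zL: "z ^ L = 1" if z: "z \<in> Z" for z
  proof -
    have "kz z dvd L" unfolding L_def using finZ z by (rule dvd_prodI)
    then obtain c where "L = kz z * c" by blast
    then show ?thesis using kz[OF z] by (simp add: power_mult)
  qed
  have nilp: "(Bi i ^\<^sub>m L - 1\<^sub>m d) ^\<^sub>m d = 0\<^sub>m d d" if i: "i \<in> J" for i
  proof -
    obtain es where es: "char_poly (Bc i) = (\<Prod>a\<leftarrow>es. [:- a, 1:])"
      using char_poly_factorized[OF Bc] by blast
    obtain T P' Q where sd: "schur_decomposition (Bc i) es = (T, P', Q)" by (metis prod_cases3)
    from schur_decomposition[OF Bc es sd] have sim: "similar_mat_wit (Bc i) T P' Q"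
      and ut: "upper_triangular T" and dg: "diag_mat T = es" by auto
    have T: "T \<in> carrier_mat d d" using sim Bc[of i] unfolding similar_mat_wit_def Let_def by auto
    have P': "P' \<in> carrier_mat d d" and Q: "Q \<in> carrier_mat d d"
      using sim Bc[of i] unfolding similar_mat_wit_def Let_def by auto
    have diag: "T $$ (j,j) ^ L = 1" if j: "j < d" for j
    proof -
      have "T $$ (j,j) \<in> set es" using dg j T unfolding diag_mat_def by auto
      then have "poly (char_poly (Bc i)) (T $$ (j,j)) = 0" unfolding es by (rule linear_poly_root)
      then have "T $$ (j,j) \<in> Z" using i by (simp add: Z_def cpc J_def)
      then show ?thesis by (rule zL)
    qed
    have "(Bc i ^\<^sub>m L - 1\<^sub>m d) ^\<^sub>m d = P' * ((T ^\<^sub>m L - 1\<^sub>m d) ^\<^sub>m d) * Q"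
      by (rule similar_pow_minus_one[OF sim Bc])
    also have "\<dots> = 0\<^sub>m d d" using nilp_triangular[OF T ut diag] P' Q by simp
    finally have c: "(Bc i ^\<^sub>m L - 1\<^sub>m d) ^\<^sub>m d = 0\<^sub>m d d" .
    have BL: "Bi i ^\<^sub>m L \<in> carrier_mat d d" using B by simp
    have X: "Bi i ^\<^sub>m L - 1\<^sub>m d \<in> carrier_mat d d" using BL by (intro carrier_matI) simp_all
    have h1: "(of_int_hom.mat_hom ((Bi i ^\<^sub>m L - 1\<^sub>m d) ^\<^sub>m d) :: complex mat) = (of_int_hom.mat_hom (Bi i ^\<^sub>m L - 1\<^sub>m d)) ^\<^sub>m d"
      by (rule of_int_hom.mat_hom_pow[OF X])
    have h2: "(of_int_hom.mat_hom (Bi i ^\<^sub>m L - 1\<^sub>m d) :: complex mat) = of_int_hom.mat_hom (Bi i ^\<^sub>m L) - 1\<^sub>m d"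
      by (rule mat_hom_minus_one[OF BL])
    have h3: "(of_int_hom.mat_hom (Bi i ^\<^sub>m L) :: complex mat) = Bc i ^\<^sub>m L"
      unfolding Bc_def by (rule of_int_hom.mat_hom_pow[OF B])
    have "(of_int_hom.mat_hom ((Bi i ^\<^sub>m L - 1\<^sub>m d) ^\<^sub>m d) :: complex mat) = (Bc i ^\<^sub>m L - 1\<^sub>m d) ^\<^sub>m d"
      unfolding h1 h2 h3 ..
    also have "\<dots> = of_int_hom.mat_hom (0\<^sub>m d d)" using c by (simp add: mat_hom_zero)
    finally show ?thesis by (rule of_int_hom.mat_hom_inj)
  qed
  show ?thesis using L0 JI infJ' nilp by blast
qed



lemma no_zero_eigen:
  fixes A :: "int^'m^'m"
  assumes "invertible A"
  shows "\<not> eigenvalue (of_int_hom.mat_hom (to_jnf A) :: complex mat) 0"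
proof
  let ?d = "CARD('m)"
  obtain A' where A': "A' ** A = mat 1" using assms unfolding invertible_def by blast
  define Ac where "Ac = (of_int_hom.mat_hom (to_jnf A) :: complex mat)"
  define Ac' where "Ac' = (of_int_hom.mat_hom (to_jnf A') :: complex mat)"
  have Ac: "Ac \<in> carrier_mat ?d ?d" and Ac': "Ac' \<in> carrier_mat ?d ?d" by (simp_all add: Ac_def Ac'_def)
  have j: "to_jnf A' * to_jnf A = 1\<^sub>m ?d"
    using arg_cong[OF A', of to_jnf] by (simp only: to_jnf_mult to_jnf_one)
  have "of_int_hom.mat_hom (to_jnf A' * to_jnf A) = (of_int_hom.mat_hom (to_jnf A') :: complex mat) * of_int_hom.mat_hom (to_jnf A)"
    by (rule of_int_hom.mat_hom_mult[OF to_jnf_carrier to_jnf_carrier])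
  then have inv: "Ac' * Ac = 1\<^sub>m ?d" unfolding Ac_def Ac'_def j by (simp only: of_int_hom.mat_hom_one)
  assume "eigenvalue (of_int_hom.mat_hom (to_jnf A) :: complex mat) 0"
  then obtain v where ev: "eigenvector Ac v 0" unfolding eigenvalue_def Ac_def by blast
  then have v: "v \<in> carrier_vec ?d" and v0: "v \<noteq> 0\<^sub>v ?d" and Av: "Ac *\<^sub>v v = 0 \<cdot>\<^sub>v v"
    using Ac unfolding eigenvector_def by auto
  have Av0: "Ac *\<^sub>v v = 0\<^sub>v ?d" unfolding Av using v by (intro eq_vecI) auto
  have "(Ac' * Ac) *\<^sub>v v = v" unfolding inv by (rule one_mult_mat_vec[OF v])
  then have "v = (Ac' * Ac) *\<^sub>v v" by simp
  also have "\<dots> = Ac' *\<^sub>v (Ac *\<^sub>v v)" by (rule assoc_mult_mat_vec[OF Ac' Ac v])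
  also have "\<dots> = 0\<^sub>v ?d" unfolding Av0 using Ac' by (intro eq_vecI) (auto simp: scalar_prod_def)
  finally show False using v0 by simp
qed

theorem theorem4p1:
  fixes A :: "int^'m^'m"
    and B :: "nat \<Rightarrow> int^'m^'m"
    and r :: "nat \<Rightarrow> int"
  assumes "invertible A"
    and "filterlim r at_top sequentially"
    and "\<And>i. invertible (B i)"
    and "\<And>i. mat_zpow (B i) (r i) = A"
  shows "\<exists>e::int. e \<noteq> 0 \<and> mat_zpow A e = mat 1"
proof -
  let ?d = "CARD('m)"
  define n where "n i = nat (r i)" for i
  define I where "I = {i. r i \<ge> 1}"
  have n1: "n i \<ge> 1" if "i \<in> I" for i using that by (simp add: n_def I_def)
  have powv: "mat_pow (B i) (n i) = A" if "i \<in> I" for i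
    using assms(4)[of i] that by (simp add: mat_zpow_def n_def I_def)
  have inf: "infinite (n ` I)"
  proof
    assume "finite (n ` I)"
    then obtain K where K: "\<forall>k\<in>n ` I. k \<le> K" using finite_nat_set_iff_bounded_le by blast
    have "\<forall>\<^sub>F i in sequentially. int K + 1 \<le> r i" using assms(2) unfolding filterlim_at_top by blast
    then obtain N where "\<forall>i\<ge>N. int K + 1 \<le> r i" unfolding eventually_sequentially by blast
    then have rN: "int K + 1 \<le> r N" by simp
    then have "N \<in> I" by (simp add: I_def)
    then have "n N \<le> K" using K by blast
    then show False using rN by (simp add: n_def)
  qed
  have pw: "to_jnf (B i) ^\<^sub>m n i = to_jnf A" if "i \<in> I" for i
    using powv[OF that] by (simp add: to_jnf_pow[symmetric])
  obtain L J where L0: "L > 0" and JI: "J \<subseteq> I" and infJ: "infinite (n ` J)"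
    and nilpJ: "\<And>i. i \<in> J \<Longrightarrow> (to_jnf (B i) ^\<^sub>m L - 1\<^sub>m ?d) ^\<^sub>m ?d = 0\<^sub>m ?d ?d"
    using spectral_main[of "to_jnf A" ?d "\<lambda>i. to_jnf (B i)", OF to_jnf_carrier to_jnf_carrier
        no_zero_eigen[OF assms(1)] pw n1 inf] by blast
  have nilp: "mat_pow (mat_pow (B i) L - mat 1) ?d = 0" if i: "i \<in> J" for i
    using nilpJ[OF i] by (intro to_jnf_inj) (simp add: to_jnf_pow to_jnf_minus to_jnf_one to_jnf_zero)
  define M where "M = mat_pow A L - mat 1"
  have "M = 0"
  proof (rule ccontr)
    assume M0: "M \<noteq> 0"
    define Cb where "Cb = (\<Sum>s\<le>?d. \<Sum>a\<in>UNIV. \<Sum>b\<in>UNIV. \<bar>mat_pow M s $ a $ b\<bar>)"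
    have bound: "int (n i) \<le> Cb" if i: "i \<in> J" for i
    proof -
      define N where "N = mat_pow (B i) L - mat 1"
      have N1: "mat 1 + N = mat_pow (B i) L" by (simp add: N_def)
      have "mat_pow (mat 1 + N) (n i) = mat_pow A L"
      proof -
        have "mat_pow (mat_pow (B i) L) (n i) = mat_pow (B i) (n i * L)" by (simp only: mat_pow_mult' mult.commute)
        also have "\<dots> = mat_pow (mat_pow (B i) (n i)) L" by (simp only: mat_pow_mult')
        also have "\<dots> = mat_pow A L" using powv[of i] i JI by auto
        finally show ?thesis unfolding N1 .
      qed
      then have Meq: "M = mat_pow (mat 1 + N) (n i) - mat 1" by (simp add: M_def)
      have Nd: "mat_pow N (Suc (?d - 1)) = 0" using nilp[OF i] by (simp add: N_def)
      define s0 where "s0 = (LEAST s. mat_pow N (Suc s) = 0)"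
      have s0: "mat_pow N (Suc s0) = 0" unfolding s0_def by (rule LeastI[where P="\<lambda>s. mat_pow N (Suc s) = 0", OF Nd])
      have s0d: "s0 \<le> ?d - 1" unfolding s0_def by (rule Least_le[where P="\<lambda>s. mat_pow N (Suc s) = 0", OF Nd])
      note MN = MN_core[OF s0, of "n i"]
      have "s0 \<noteq> 0"
      proof
        assume "s0 = 0"
        then have "mat_pow M 1 = 0" using MN(2) Meq by simp
        then show False using M0 by simp
      qed
      then obtain s' where s': "s0 = Suc s'" by (cases s0) auto
      have Ns0: "mat_pow N s0 \<noteq> 0"
      proof
        assume "mat_pow N s0 = 0"
        then have "mat_pow N (Suc s') = 0" using s' by simp
        then have "s0 \<le> s'" unfolding s0_def by (rule Least_le[where P="\<lambda>s. mat_pow N (Suc s) = 0"])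
        then show False using s' by simp
      qed
      then obtain a b where ab: "mat_pow N s0 $ a $ b \<noteq> 0"
      proof -
        have "\<exists>a b. mat_pow N s0 $ a $ b \<noteq> 0"
        proof (rule ccontr)
          assume "\<not> (\<exists>a b. mat_pow N s0 $ a $ b \<noteq> 0)"
          then have "mat_pow N s0 = 0" by (simp add: Finite_Cartesian_Product.vec_eq_iff)
          then show False using Ns0 by simp
        qed
        then show ?thesis using that by blast
      qed
      have Ms: "mat_pow M s0 $ a $ b = int (n i) ^ s0 * mat_pow N s0 $ a $ b"
        using MN(1) Meq by (simp add: mat_scal')
      have "int (n i) \<le> int (n i) ^ s0" using n1[of i] i JI \<open>s0 \<noteq> 0\<close> by (intro self_le_power) auto
      also have "\<dots> \<le> \<bar>int (n i) ^ s0 * mat_pow N s0 $ a $ b\<bar>"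
      proof -
        have x1: "1 \<le> \<bar>mat_pow N s0 $ a $ b\<bar>" using ab by linarith
        have "int (n i) ^ s0 * 1 \<le> int (n i) ^ s0 * \<bar>mat_pow N s0 $ a $ b\<bar>"
          by (rule mult_left_mono[OF x1]) simp
        then show ?thesis by (simp add: abs_mult)
      qed
      also have "\<dots> = \<bar>mat_pow M s0 $ a $ b\<bar>" using Ms by simp
      also have "\<dots> \<le> (\<Sum>b\<in>UNIV. \<bar>mat_pow M s0 $ a $ b\<bar>)" by (rule member_le_sum) auto
      also have "\<dots> \<le> (\<Sum>a\<in>UNIV. \<Sum>b\<in>UNIV. \<bar>mat_pow M s0 $ a $ b\<bar>)"
        by (rule member_le_sum[where i=a]) (auto intro: sum_nonneg)
      also have "\<dots> \<le> Cb" unfolding Cb_def using s0d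
        by (intro member_le_sum[where i=s0]) (auto intro: sum_nonneg)
      finally show ?thesis .
    qed
    then have "n ` J \<subseteq> {..nat Cb}" by force
    then have "finite (n ` J)" by (rule finite_subset) simp
    then show False using infJ by simp
  qed
  then have "mat_pow A L = mat 1" by (simp add: M_def)
  then show ?thesis using L0 by (intro exI[of _ "int L"]) (simp add: mat_zpow_def)
qed

end
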